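(* Let $p\ge5$ be prime. Then $D^pP$ is a modular form mod $p$; that is, the image of $D^pP\in\mathbb{Z}_{(p)}[P,Q,R]$ in $(\mathbb{Z}/p\mathbb{Z})[P,Q,R]$ lies in $(\mathbb{Z}/p\mathbb{Z})[Q,R]$.
   Context: $\mathbb{Z}_{(p)}$ is the localization of $\mathbb{Z}$ at $p$. $P=E_2,Q=E_4,R=E_6$ are the normalized Eisenstein series, viewed as independent variables. $D=q\frac{d}{dq}$ acts on $\mathbb{Z}_{(p)}[P,Q,R]$ as the derivation with $DP=\frac{P^2-Q}{12}$, $DQ=\frac{PQ-R}{3}$, $DR=\frac{PR-Q^2}{2}$. *)

theory Defs
  imports Complex_Main "HOL-Library.Poly_Mapping" "HOL-Computational_Algebra.Primes"
begin

type_synonym mpoly = "(nat \<Rightarrow>\<^sub>0 nat) \<Rightarrow>\<^sub>0 rat"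

definition Const :: "rat \<Rightarrow> mpoly" where
  "Const c = Poly_Mapping.single 0 c"

definition Var :: "nat \<Rightarrow> mpoly" where
  "Var i = Poly_Mapping.single (Poly_Mapping.single i 1) 1"

abbreviation "PP \<equiv> Var 0"
abbreviation "QQ \<equiv> Var 1"
abbreviation "RR \<equiv> Var 2"

definition pderiv_var :: "nat \<Rightarrow> mpoly \<Rightarrow> mpoly" where
  "pderiv_var i f = (\<Sum>m\<in>Poly_Mapping.keys f.
      Poly_Mapping.single (m - Poly_Mapping.single i 1)
        (Poly_Mapping.lookup f m * of_nat (Poly_Mapping.lookup (m::nat \<Rightarrow>\<^sub>0 nat) i)))"

text \<open>The Ramanujan derivation D = q d/dq on Q[P,Q,R].\<close>
definition Dop :: "mpoly \<Rightarrow> mpoly" where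
  "Dop f = pderiv_var 0 f * (Const (1/12) * (PP * PP - QQ))
         + pderiv_var 1 f * (Const (1/3) * (PP * QQ - RR))
         + pderiv_var 2 f * (Const (1/2) * (PP * RR - QQ * QQ))"

definition in_Zloc :: "nat \<Rightarrow> rat \<Rightarrow> bool" where
  "in_Zloc p x \<longleftrightarrow> (\<exists>a b::int. b \<noteq> 0 \<and> coprime b (int p) \<and> x = of_int a / of_int b)"

definition poly_in_Zloc :: "nat \<Rightarrow> mpoly \<Rightarrow> bool" where
  "poly_in_Zloc p f \<longleftrightarrow> (\<forall>m. in_Zloc p (Poly_Mapping.lookup f m))"

text \<open>The reduction mod p of f (assumed in Z_(p)[P,Q,R]) lies in (Z/pZ)[Q,R]:
  every coefficient of a monomial involving P lies in p Z_(p).\<close>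
definition reduction_in_QR :: "nat \<Rightarrow> mpoly \<Rightarrow> bool" where
  "reduction_in_QR p f \<longleftrightarrow>
     (\<forall>m::nat \<Rightarrow>\<^sub>0 nat. Poly_Mapping.lookup m 0 \<noteq> 0 \<longrightarrow> in_Zloc p (Poly_Mapping.lookup f m / of_nat p))"

end

theory Submission
  imports Defs
begin


abbreviation e :: "nat \<Rightarrow> (nat \<Rightarrow>\<^sub>0 nat)" where "e i \<equiv> Poly_Mapping.single i 1"

lemma eq_shift_iff:
  "(k = e i + q) \<longleftrightarrow> (0 < Poly_Mapping.lookup k i \<and> q = k - e i)"
proof
  assume "k = e i + q" then show "0 < Poly_Mapping.lookup k i \<and> q = k - e i"
    by (auto simp: poly_mapping_eq_iff lookup_add lookup_minus lookup_single when_def fun_eq_iff)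
next
  assume "0 < Poly_Mapping.lookup k i \<and> q = k - e i" then show "k = e i + q"
    by (auto simp: poly_mapping_eq_iff lookup_add lookup_minus lookup_single when_def fun_eq_iff)
qed

lemma lookup_Var_mult:
  "Poly_Mapping.lookup (Var i * g) k = (if 0 < Poly_Mapping.lookup k i then Poly_Mapping.lookup g (k - e i) else 0)"
proof -
  have "Poly_Mapping.lookup (Var i * g) k = (Sum_any (\<lambda>q. Poly_Mapping.lookup g q when k = e i + q))"
    by (simp add: Var_def lookup_mult lookup_single when_mult Sum_any_right_distrib)
  also have "\<dots> = (Sum_any (\<lambda>q. (if 0 < Poly_Mapping.lookup k i then Poly_Mapping.lookup g (k - e i) else 0) when q = k - e i))"
    apply (rule Sum_any.cong) apply (subst eq_shift_iff) by (auto simp: when_def)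
  finally show ?thesis by simp
qed

lemma lookup_Const_mult: "Poly_Mapping.lookup (Const c * g) k = c * Poly_Mapping.lookup g k"
  by (simp add: Const_def lookup_mult lookup_single when_mult Sum_any_right_distrib mult_when)

lemma lookup_Const: "Poly_Mapping.lookup (Const c) k = (c when k = 0)"
  by (simp add: Const_def lookup_single when_def)

lemma lookup_pderiv:
  "Poly_Mapping.lookup (pderiv_var i f) k = of_nat (Poly_Mapping.lookup k i + 1) * Poly_Mapping.lookup f (k + e i)"
proof -
  have "Poly_Mapping.lookup (pderiv_var i f) k = (\<Sum>m\<in>Poly_Mapping.keys f. (Poly_Mapping.lookup f m * of_nat (Poly_Mapping.lookup m i) when m - e i = k))"
    by (simp add: pderiv_var_def lookup_sum lookup_single)
  also have "\<dots> = (\<Sum>m\<in>Poly_Mapping.keys f. (Poly_Mapping.lookup f m * of_nat (Poly_Mapping.lookup m i) when m = k + e i))"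
  proof (rule sum.cong)
    fix m assume "m \<in> Poly_Mapping.keys f"
    show "(Poly_Mapping.lookup f m * of_nat (Poly_Mapping.lookup m i) when m - e i = k) = (Poly_Mapping.lookup f m * of_nat (Poly_Mapping.lookup m i) when m = k + e i)"
    proof (cases "Poly_Mapping.lookup m i = 0")
      case True
      have "Poly_Mapping.lookup (k + e i) i \<noteq> Poly_Mapping.lookup m i" using True by (simp add: lookup_add)
      then have "m \<noteq> k + e i" by auto
      then show ?thesis using True by (simp add: when_def)
    next
      case False
      have "(m - e i = k) = (m = k + e i)" using False
        by (auto simp: poly_mapping_eq_iff lookup_add lookup_minus lookup_single when_def fun_eq_iff)
      then show ?thesis by simp
    qed
  qed simp
  also have "\<dots> = (if k + e i \<in> Poly_Mapping.keys f then Poly_Mapping.lookup f (k + e i) * of_nat (Poly_Mapping.lookup (k + e i) i) else 0)"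
    by (simp add: when_def sum.delta')
  also have "\<dots> = of_nat (Poly_Mapping.lookup k i + 1) * Poly_Mapping.lookup f (k + e i)"
    by (auto simp: lookup_add in_keys_iff)
  finally show ?thesis .
qed


abbreviation lk where "lk \<equiv> Poly_Mapping.lookup"
abbreviation d where "d \<equiv> pderiv_var"

lemma pd_add: "d i (f + g) = d i f + d i g"
  by (rule poly_mapping_eqI) (simp add: lookup_pderiv lookup_add algebra_simps)
lemma pd_diff: "d i (f - g) = d i f - d i g"
  by (rule poly_mapping_eqI) (simp add: lookup_pderiv lookup_minus algebra_simps)
lemma pd_Const_mult: "d i (Const c * f) = Const c * d i f"
  by (rule poly_mapping_eqI) (simp add: lookup_pderiv lookup_Const_mult mult.left_commute)
lemma pd_Const: "d i (Const c) = 0"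
proof (rule poly_mapping_eqI)
  fix k
  have "lk (k + e i) i \<noteq> 0" by (simp add: lookup_add)
  then have "k + e i \<noteq> 0" by auto
  then show "lk (d i (Const c)) k = lk 0 k" by (simp add: lookup_pderiv lookup_Const)
qed
lemma pd_comm: "d i (d j f) = d j (d i f)"
  by (rule poly_mapping_eqI) (simp add: lookup_pderiv lookup_add lookup_single when_def add_ac)

lemma pd_Var: "d i (Var j * f) = Var j * d i f + (if i = j then f else 0)"
proof (rule poly_mapping_eqI)
  fix k
  show "lk (d i (Var j * f)) k = lk (Var j * d i f + (if i = j then f else 0)) k"
  proof (cases "i = j")
    case True
    have "0 < lk k i \<Longrightarrow> k - e i + e i = k"
      by (rule poly_mapping_eqI) (auto simp add: lookup_add lookup_minus lookup_single when_def)
    moreover have "k + e i - e i = k"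
      by (rule poly_mapping_eqI) (simp add: lookup_add lookup_minus lookup_single when_def)
    moreover have "lk (k - e i) i = lk k i - 1"
      by (simp add: lookup_minus)
    ultimately show ?thesis using True
      by (simp add: lookup_pderiv lookup_Var_mult lookup_add) (auto simp: distrib_left distrib_right of_nat_diff)
  next
    case False
    have "0 < lk k j \<Longrightarrow> k + e i - e j = k - e j + e i"
      by (rule poly_mapping_eqI) (use False in \<open>auto simp add: lookup_add lookup_minus lookup_single when_def\<close>)
    moreover have "lk (k - e j) i = lk k i" "lk (k + e i) j = lk k j"
      using False by (simp_all add: lookup_add lookup_minus lookup_single when_def)
    ultimately show ?thesis using False
      by (simp add: lookup_pderiv lookup_Var_mult lookup_add)
  qed
qed

lemma pd_PP: "d 0 PP = Const 1"
proof (rule poly_mapping_eqI)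
  fix k
  have "(e 0 = k + e 0) = (k = 0)"
    by (metis add_0 add_cancel_right_left)
  then show "lk (d 0 PP) k = lk (Const 1) k"
    by (simp add: lookup_pderiv Var_def lookup_Const lookup_single when_def)
qed

lemma Const_add: "Const a + Const b = Const (a + b)"
  by (simp add: Const_def single_add)
lemma Const_mult: "Const a * Const b = Const (a * b)"
  by (simp add: Const_def mult_single)
lemma Const_numeral: "Const (numeral n) = numeral n"
  by (simp add: Const_def)
lemma Const_scale: "numeral n * Const c = Const (numeral n * c)"
  by (simp add: Const_mult[symmetric] Const_numeral)
lemma Const_one: "Const 1 = 1"
  by (simp add: Const_def)

lemma Dop_expand: "Dop f = Const (1/12) * (Var 0 * (Var 0 * d 0 f) - Var 1 * d 0 f)
   + Const (1/3) * (Var 0 * (Var 1 * d 1 f) - Var 2 * d 1 f)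
   + Const (1/2) * (Var 0 * (Var 2 * d 2 f) - Var 1 * (Var 1 * d 2 f))"
  by (simp add: Dop_def algebra_simps)

lemma Dop_add: "Dop (f + g) = Dop f + Dop g"
  by (simp only: Dop_expand pd_add) (simp add: algebra_simps)
lemma Dop_Const_mult: "Dop (Const c * f) = Const c * Dop f"
  by (simp only: Dop_expand pd_Const_mult) (simp add: algebra_simps)
lemma Dop_Const: "Dop (Const c) = 0"
  by (simp add: Dop_def pd_Const)

lemma comm_raw: "d 0 (Dop g) = Dop (d 0 g) + Const (1/12) * (2 * (Var 0 * d 0 g) + 4 * (Var 1 * d 1 g) + 6 * (Var 2 * d 2 g))"
proof -
  have c6: "Const (1/6) = 2 * Const (1/12)" and c3: "Const (1/3) = 4 * Const (1/12)"
    and c2: "Const (1/2) = 6 * Const(1/12)"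
    by (simp_all add: Const_scale)
  show ?thesis
    apply (simp only: Dop_expand pd_add pd_diff pd_Const_mult pd_Var if_True if_False pd_comm[of 0 1] pd_comm[of 0 2])
    apply (simp add: c3 c2 algebra_simps)
    done
qed


definition wt :: "(nat \<Rightarrow>\<^sub>0 nat) \<Rightarrow> int" where
  "wt k = 2 * int (lk k 0) + 4 * int (lk k 1) + 6 * int (lk k 2)"
definition vw :: "nat \<Rightarrow> int" where
  "vw i = (if i = 0 then 2 else if i = 1 then 4 else if i = 2 then 6 else 0)"
definition homog :: "int \<Rightarrow> mpoly \<Rightarrow> bool" where
  "homog w f \<longleftrightarrow> (\<forall>k. lk f k \<noteq> 0 \<longrightarrow> wt k = w)"

lemma wt_add: "wt (k + e i) = wt k + vw i"
  by (auto simp: wt_def vw_def lookup_add lookup_single when_def)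
lemma wt_minus: "0 < lk k i \<Longrightarrow> wt (k - e i) = wt k - vw i"
  by (auto simp: wt_def vw_def lookup_minus lookup_single when_def of_nat_diff)

lemma homog_add: "homog w f \<Longrightarrow> homog w g \<Longrightarrow> homog w (f + g)"
  unfolding homog_def lookup_add by (metis add_0)
lemma homog_diff: "homog w f \<Longrightarrow> homog w g \<Longrightarrow> homog w (f - g)"
  unfolding homog_def lookup_minus by (metis diff_zero)
lemma homog_Const_mult: "homog w f \<Longrightarrow> homog w (Const c * f)"
  by (auto simp: homog_def lookup_Const_mult)
lemma homog_Var: "homog w f \<Longrightarrow> homog (w + vw i) (Var i * f)"
  unfolding homog_def lookup_Var_mult
proof (intro allI impI)
  fix k assume h: "\<forall>k. lk f k \<noteq> 0 \<longrightarrow> wt k = w"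
    and nz: "(if 0 < lk k i then lk f (k - e i) else 0) \<noteq> 0"
  then have "0 < lk k i" by (auto split: if_splits)
  with nz h have "wt (k - e i) = w" by auto
  with wt_minus[OF \<open>0 < lk k i\<close>] show "wt k = w + vw i" by simp
qed
lemma homog_pd: "homog w f \<Longrightarrow> homog (w - vw i) (d i f)"
  unfolding homog_def lookup_pderiv
  by (metis add_diff_cancel_right' mult_eq_0_iff wt_add)
lemma homog_cong: "homog a f \<Longrightarrow> a = b \<Longrightarrow> homog b f"
  by simp

lemma homog_Dop: assumes h: "homog w f" shows "homog (w + 2) (Dop f)"
proof -
  have h0: "homog (w - 2) (d 0 f)" by (rule homog_cong[OF homog_pd[OF h, of 0]]) (simp add: vw_def)
  have h1: "homog (w - 4) (d 1 f)" by (rule homog_cong[OF homog_pd[OF h, of 1]]) (simp add: vw_def)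
  have h2: "homog (w - 6) (d 2 f)" by (rule homog_cong[OF homog_pd[OF h, of 2]]) (simp add: vw_def)
  have a1: "homog (w + 2) (Var 0 * (Var 0 * d 0 f))"
    by (rule homog_cong[OF homog_Var[OF homog_Var[OF h0, of 0], of 0]]) (simp add: vw_def)
  have a2: "homog (w + 2) (Var 1 * d 0 f)"
    by (rule homog_cong[OF homog_Var[OF h0, of 1]]) (simp add: vw_def)
  have b1: "homog (w + 2) (Var 0 * (Var 1 * d 1 f))"
    by (rule homog_cong[OF homog_Var[OF homog_Var[OF h1, of 1], of 0]]) (simp add: vw_def)
  have b2: "homog (w + 2) (Var 2 * d 1 f)"
    by (rule homog_cong[OF homog_Var[OF h1, of 2]]) (simp add: vw_def)
  have c1: "homog (w + 2) (Var 0 * (Var 2 * d 2 f))"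
    by (rule homog_cong[OF homog_Var[OF homog_Var[OF h2, of 2], of 0]]) (simp add: vw_def)
  have c2: "homog (w + 2) (Var 1 * (Var 1 * d 2 f))"
    by (rule homog_cong[OF homog_Var[OF homog_Var[OF h2, of 1], of 1]]) (simp add: vw_def)
  show ?thesis unfolding Dop_expand
    by (intro homog_add homog_diff homog_Const_mult a1 a2 b1 b2 c1 c2)
qed

lemma lookup_numeral_mult: "lk (numeral n * (f::mpoly)) k = numeral n * lk f k"
proof -
  have "numeral n * f = Const (numeral n) * f" by (simp add: Const_numeral)
  then show ?thesis by (simp only: lookup_Const_mult)
qed

lemma lookup_Euler: "lk (Var i * d i g) k = of_nat (lk k i) * lk g k"
proof -
  have "0 < lk k i \<Longrightarrow> k - e i + e i = k"
    by (rule poly_mapping_eqI) (auto simp add: lookup_add lookup_minus lookup_single when_def)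
  then show ?thesis
    by (auto simp: lookup_Var_mult lookup_pderiv lookup_minus of_nat_diff)
qed

lemma Euler: assumes "homog w g"
  shows "Const (1/12) * (2 * (Var 0 * d 0 g) + 4 * (Var 1 * d 1 g) + 6 * (Var 2 * d 2 g))
    = Const (of_int w / 12) * g"
proof (rule poly_mapping_eqI)
  fix k
  have "lk g k \<noteq> 0 \<Longrightarrow> wt k = w" using assms by (simp add: homog_def)
  then have "(2 * of_nat (lk k 0) + 4 * of_nat (lk k 1) + 6 * of_nat (lk k 2)) * lk g k = (of_int w :: rat) * lk g k"
  proof (cases "lk g k = 0")
    case False
    then have "w = 2 * int (lk k 0) + 4 * int (lk k 1) + 6 * int (lk k 2)"
      using \<open>lk g k \<noteq> 0 \<Longrightarrow> wt k = w\<close> by (simp add: wt_def)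
    then have "(of_int w :: rat) = of_int (2 * int (lk k 0) + 4 * int (lk k 1) + 6 * int (lk k 2))" by simp
    then show ?thesis by simp
  qed simp
  then show "lk (Const (1/12) * (2 * (Var 0 * d 0 g) + 4 * (Var 1 * d 1 g) + 6 * (Var 2 * d 2 g))) k
    = lk (Const (of_int w / 12) * g) k"
    by (simp add: lookup_Const_mult lookup_add lookup_numeral_mult lookup_Euler) (elim disjE, simp, drule sym, simp add: algebra_simps)
qed

lemma comm_homog: "homog w g \<Longrightarrow> d 0 (Dop g) = Dop (d 0 g) + Const (of_int w / 12) * g"
  using comm_raw[of g] Euler[of w g] by simp

definition F :: "nat \<Rightarrow> mpoly" where "F n = (Dop ^^ n) PP"

lemma F_Suc: "F (Suc n) = Dop (F n)" by (simp add: F_def)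

lemma homog_PP: "homog 2 PP"
  by (auto simp: homog_def Var_def lookup_single when_def wt_def)

lemma homog_F: "homog (2 + 2 * int n) (F n)"
proof (induction n)
  case 0 then show ?case using homog_PP by (simp add: F_def)
next
  case (Suc n)
  have "homog (2 + 2 * int n + 2) (Dop (F n))" by (rule homog_Dop[OF Suc])
  then show ?case by (simp add: F_def algebra_simps)
qed

lemma Const_add_mult: "Const a * f + Const b * f = Const (a + b) * f"
  by (simp add: Const_add[symmetric] algebra_simps)

lemma dF: "d 0 (F (Suc n)) = Const (of_nat ((n+1)*(n+2)) / 12) * F n"
proof (induction n)
  case 0
  have "d 0 (F 1) = Dop (d 0 PP) + Const (of_int 2 / 12) * PP"
    using comm_homog[OF homog_PP] by (simp add: F_def)
  then show ?case by (simp add: pd_PP Dop_Const F_def)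
next
  case (Suc n)
  have "d 0 (F (Suc (Suc n))) = Dop (d 0 (F (Suc n))) + Const (of_int (2 + 2 * int (Suc n)) / 12) * F (Suc n)"
    using comm_homog[OF homog_F[of "Suc n"]] by (simp add: F_def)
  also have "\<dots> = Const (of_nat ((n+1)*(n+2)) / 12) * F (Suc n) + Const (of_int (2 + 2 * int (Suc n)) / 12) * F (Suc n)"
    by (subst Suc.IH) (simp only: Dop_Const_mult F_Suc)
  also have "\<dots> = Const (of_nat ((Suc n+1)*(Suc n+2)) / 12) * F (Suc n)"
    by (simp only: Const_add_mult) (rule arg_cong[where f="\<lambda>x. Const x * F (Suc n)"], simp add: field_simps)
  finally show ?case .
qed


lemma Zl_int: "in_Zloc p (of_int a)"
  unfolding in_Zloc_def by (rule exI[of _ a], rule exI[of _ 1]) simp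
lemma Zl_nat: "in_Zloc p (of_nat a)"
  using Zl_int[of p "int a"] by simp
lemma Zl_add: "in_Zloc p x \<Longrightarrow> in_Zloc p y \<Longrightarrow> in_Zloc p (x + y)"
  unfolding in_Zloc_def
proof (elim exE conjE)
  fix a b a' b' :: int
  assume "b \<noteq> 0" "coprime b (int p)" "x = of_int a / of_int b" "b' \<noteq> 0" "coprime b' (int p)" "y = of_int a' / of_int b'"
  then show "\<exists>a b. b \<noteq> 0 \<and> coprime b (int p) \<and> x + y = of_int a / of_int b"
  proof (intro exI conjI)
    show "b * b' \<noteq> 0" using \<open>b \<noteq> 0\<close> \<open>b' \<noteq> 0\<close> by simp
    show "coprime (b * b') (int p)" using \<open>coprime b (int p)\<close> \<open>coprime b' (int p)\<close> by simp
    show "x + y = of_int (a * b' + a' * b) / of_int (b * b')"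
      using \<open>b \<noteq> 0\<close> \<open>b' \<noteq> 0\<close> \<open>x = _\<close> \<open>y = _\<close> by (simp add: add_frac_eq)
  qed
qed
lemma Zl_mult: "in_Zloc p x \<Longrightarrow> in_Zloc p y \<Longrightarrow> in_Zloc p (x * y)"
  unfolding in_Zloc_def
proof (elim exE conjE)
  fix a b a' b' :: int
  assume "b \<noteq> 0" "coprime b (int p)" "x = of_int a / of_int b" "b' \<noteq> 0" "coprime b' (int p)" "y = of_int a' / of_int b'"
  then show "\<exists>a b. b \<noteq> 0 \<and> coprime b (int p) \<and> x * y = of_int a / of_int b"
    by (intro exI[of _ "a * a'"] exI[of _ "b * b'"]) simp
qed
lemma Zl_uminus: "in_Zloc p x \<Longrightarrow> in_Zloc p (- x)"
  using Zl_mult[OF Zl_int[of p "-1"]] by simp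
lemma Zl_diff: "in_Zloc p x \<Longrightarrow> in_Zloc p y \<Longrightarrow> in_Zloc p (x - y)"
  using Zl_add[OF _ Zl_uminus] by simp
lemma Zl_inv: "b \<noteq> 0 \<Longrightarrow> coprime b (int p) \<Longrightarrow> in_Zloc p (1 / of_int b)"
  unfolding in_Zloc_def by (rule exI[of _ 1], rule exI[of _ b]) simp

lemma Pl_add: "poly_in_Zloc p f \<Longrightarrow> poly_in_Zloc p g \<Longrightarrow> poly_in_Zloc p (f + g)"
  by (simp add: poly_in_Zloc_def lookup_add Zl_add)
lemma Pl_diff: "poly_in_Zloc p f \<Longrightarrow> poly_in_Zloc p g \<Longrightarrow> poly_in_Zloc p (f - g)"
  by (simp add: poly_in_Zloc_def lookup_minus Zl_diff)
lemma Pl_Const: "in_Zloc p c \<Longrightarrow> poly_in_Zloc p f \<Longrightarrow> poly_in_Zloc p (Const c * f)"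
  by (simp add: poly_in_Zloc_def lookup_Const_mult Zl_mult)
lemma Pl_Var: "poly_in_Zloc p f \<Longrightarrow> poly_in_Zloc p (Var i * f)"
  by (simp add: poly_in_Zloc_def lookup_Var_mult Zl_int[of p 0, simplified])
lemma Pl_pd: "poly_in_Zloc p f \<Longrightarrow> poly_in_Zloc p (d i f)"
  unfolding poly_in_Zloc_def lookup_pderiv by (metis Zl_mult Zl_nat)

lemma Pl_PP: "poly_in_Zloc p PP"
  unfolding poly_in_Zloc_def Var_def lookup_single when_def
  using Zl_int[of p 0] Zl_int[of p 1] by simp

lemma p_not_dvd_small:
  assumes "prime p" "p \<ge> 5" shows "\<not> p dvd (12::nat)"
proof
  assume "p dvd (12::nat)"
  then have "p dvd (4::nat) * 3" by simp
  then have "p dvd (4::nat) \<or> p dvd (3::nat)" using assms(1) prime_dvd_mult_iff by blast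
  moreover have "\<not> p dvd (4::nat)" using assms(2) dvd_imp_le[of p 4] by linarith
  moreover have "\<not> p dvd (3::nat)" using assms(2) dvd_imp_le[of p 3] by linarith
  ultimately show False by blast
qed

lemma Zl_frac: assumes "prime p" "p \<ge> 5" "n dvd 12" "n > 0" shows "in_Zloc p (1 / of_nat n)"
proof -
  have "\<not> p dvd n" using p_not_dvd_small[OF assms(1,2)] assms(3) dvd_trans by blast
  then have "coprime n p" using prime_imp_coprime[OF assms(1)] by (simp add: coprime_commute)
  then have "coprime (int n) (int p)" by simp
  then show ?thesis using Zl_inv[of "int n" p] assms(4) by simp
qed

lemma Pl_Dop: assumes "prime p" "p \<ge> 5" "poly_in_Zloc p f" shows "poly_in_Zloc p (Dop f)"
proof -
  have z12: "in_Zloc p (1/12)" using Zl_frac[OF assms(1,2), of 12] by simp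
  have z3: "in_Zloc p (1/3)" using Zl_frac[OF assms(1,2), of 3] by simp
  have z2: "in_Zloc p (1/2)" using Zl_frac[OF assms(1,2), of 2] by simp
  have h0: "poly_in_Zloc p (d 0 f)" "poly_in_Zloc p (d 1 f)" "poly_in_Zloc p (d 2 f)"
    using Pl_pd[OF assms(3)] by auto
  have t1: "poly_in_Zloc p (Const (1/12) * (Var 0 * (Var 0 * d 0 f) - Var 1 * d 0 f))"
    using Pl_Const[OF z12 Pl_diff[OF Pl_Var[OF Pl_Var[OF h0(1)]] Pl_Var[OF h0(1)]]] .
  have t2: "poly_in_Zloc p (Const (1/3) * (Var 0 * (Var 1 * d 1 f) - Var 2 * d 1 f))"
    using Pl_Const[OF z3 Pl_diff[OF Pl_Var[OF Pl_Var[OF h0(2)]] Pl_Var[OF h0(2)]]] .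
  have t3: "poly_in_Zloc p (Const (1/2) * (Var 0 * (Var 2 * d 2 f) - Var 1 * (Var 1 * d 2 f)))"
    using Pl_Const[OF z2 Pl_diff[OF Pl_Var[OF Pl_Var[OF h0(3)]] Pl_Var[OF Pl_Var[OF h0(3)]]]] .
  have "Dop f = Const (1/12) * (Var 0 * (Var 0 * d 0 f) - Var 1 * d 0 f)
   + Const (1/3) * (Var 0 * (Var 1 * d 1 f) - Var 2 * d 1 f)
   + Const (1/2) * (Var 0 * (Var 2 * d 2 f) - Var 1 * (Var 1 * d 2 f))" by (rule Dop_expand)
  with Pl_add[OF Pl_add[OF t1 t2] t3] show ?thesis by metis
qed

lemma Pl_F: "prime p \<Longrightarrow> p \<ge> 5 \<Longrightarrow> poly_in_Zloc p (F n)"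
proof (induction n)
  case 0 then show ?case by (simp add: F_def Pl_PP)
next
  case (Suc n) then show ?case unfolding F_Suc using Pl_Dop by blast
qed


theorem proposition3p7:
  fixes p :: nat
  assumes "prime p" and "p \<ge> 5"
  shows "poly_in_Zloc p ((Dop ^^ p) PP) \<and> reduction_in_QR p ((Dop ^^ p) PP)"
proof
  show "poly_in_Zloc p ((Dop ^^ p) PP)" using Pl_F[OF assms, of p] by (simp add: F_def)
  show "reduction_in_QR p ((Dop ^^ p) PP)"
    unfolding reduction_in_QR_def
  proof (intro allI impI)
    fix m :: "nat \<Rightarrow>\<^sub>0 nat" assume m0: "lk m 0 \<noteq> 0"
    define a where "a = lk m 0"
    define k where "k = m - e 0"
    have mk: "m = k + e 0" unfolding k_def
      by (rule poly_mapping_eqI) (use m0 in \<open>auto simp add: lookup_add lookup_minus lookup_single when_def\<close>)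
    have ka: "lk k 0 + 1 = a" using m0 by (simp add: k_def a_def lookup_minus)
    have pS: "p = Suc (p - 1)" using assms(2) by simp
    have dp: "d 0 (F p) = Const (of_nat (p * (p + 1)) / 12) * F (p - 1)"
      using dF[of "p - 1"] pS by (metis Suc_eq_plus1 add_2_eq_Suc')
    have coef: "of_nat a * lk (F p) m = of_nat (p * (p + 1)) / 12 * lk (F (p - 1)) k"
      using arg_cong[OF dp, of "\<lambda>f. lk f k"] by (simp add: lookup_pderiv lookup_Const_mult ka[symmetric] mk)
    have Fp: "(Dop ^^ p) PP = F p" by (simp add: F_def)
    show "in_Zloc p (lk ((Dop ^^ p) PP) m / of_nat p)"
    proof (cases "p dvd a")
      case True
      have "lk (F p) m = 0"
      proof (rule ccontr)
        assume nz: "lk (F p) m \<noteq> 0"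
        then have w: "wt m = 2 + 2 * int p" using homog_F[of p] by (simp add: homog_def)
        obtain j where j: "a = p * j" using True by blast
        have "j \<noteq> 0" using j m0 a_def by auto
        then consider "j = 1" | "j \<ge> 2" by linarith
        then show False
        proof cases
          case 1
          then have "int (lk m 0) = int p" using j a_def by simp
          then have "4 * int (lk m 1) + 6 * int (lk m 2) = 2" using w by (simp add: wt_def)
          then show False by presburger
        next
          case 2
          then have "p * j \<ge> p * 2" by simp
          then have "int (lk m 0) \<ge> 2 * int p" using j a_def by linarith
          then show False using w assms(2) by (simp add: wt_def)
        qed
      qed
      then show ?thesis using Zl_int[of p 0] Fp by simp
    next
      case False
      have a0: "a \<noteq> 0" using m0 a_def by simp
      have p0: "p \<noteq> 0" using assms(2) by simp
      have eq: "lk (F p) m / of_nat p = of_nat (p + 1) * (1 / of_int (int (12 * a))) * lk (F (p - 1)) k"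
        using coef a0 p0 by (simp add: field_simps)
      have "\<not> p dvd 12 * a" using False p_not_dvd_small[OF assms] assms(1) prime_dvd_mult_iff by blast
      then have "coprime (12 * a) p" using prime_imp_coprime[OF assms(1)] coprime_commute by blast
      then have c: "coprime (int (12 * a)) (int p)" by (simp only: coprime_int_iff)
      have "in_Zloc p (lk (F (p - 1)) k)" using Pl_F[OF assms] by (simp add: poly_in_Zloc_def)
      then have "in_Zloc p (of_nat (p + 1) * (1 / of_int (int (12 * a))) * lk (F (p - 1)) k)"
        by (intro Zl_mult Zl_nat Zl_inv[OF _ c]) (use a0 in simp_all)
      then show ?thesis using eq Fp by simp
    qed
  qed
qed

end
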